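(* Let $f\colon X\to X$ be a cw-expansive homeomorphism of a compact metric space $X$. Then there are $\delta>0$ and a continuous function $\mathcal L\colon\mathcal C_\delta(X)\to\mathbb{R}$ such that: 1. $\mathcal L(A)\ge0$ for all $A\in\mathcal C_\delta(X)$, with equality if and only if $A$ is a singleton; 2. $\mathcal L(f(A))-2\mathcal L(A)+\mathcal L(f^{-1}(A))=\mathcal L(A)$ whenever $f(A),A,f^{-1}(A)\in\mathcal C_\delta(X)$.
   Context: A continuum is a nonempty compact connected set. $\mathcal C(X)$ is the space of subcontinua of $X$ with the Hausdorff distance, and $\mathcal C_\delta(X)=\{A\in\mathcal C(X):\operatorname{diam}A\le\delta\}$. A homeomorphism $f$ is cw-expansive if there is $\delta>0$ such that $f^n(A)\in\mathcal C_\delta(X)$ for all $n\in\mathbb{Z}$ implies $A\in\mathcal C_0(X)$, i.e. $A$ is a singleton. *)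

theory Defs
  imports "HOL-Analysis.Analysis"
begin

definition hausdist :: "'a::metric_space set \<Rightarrow> 'a set \<Rightarrow> real" where
  "hausdist A B = max (SUP a\<in>A. infdist a B) (SUP b\<in>B. infdist b A)"

definition continuum_in :: "'a::metric_space set \<Rightarrow> 'a set \<Rightarrow> bool" where
  "continuum_in X A \<longleftrightarrow> A \<subseteq> X \<and> A \<noteq> {} \<and> compact A \<and> connected A"

definition C_delta :: "'a::metric_space set \<Rightarrow> real \<Rightarrow> 'a set set" where
  "C_delta X d = {A. continuum_in X A \<and> diameter A \<le> d}"

text \<open>Integer iterates of f, with g the inverse of f.\<close>
definition zpow :: "('a \<Rightarrow> 'a) \<Rightarrow> ('a \<Rightarrow> 'a) \<Rightarrow> int \<Rightarrow> 'a \<Rightarrow> 'a" where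
  "zpow f g n = (if n \<ge> 0 then f ^^ nat n else g ^^ nat (- n))"

definition cw_expansive :: "'a::metric_space set \<Rightarrow> ('a \<Rightarrow> 'a) \<Rightarrow> ('a \<Rightarrow> 'a) \<Rightarrow> bool" where
  "cw_expansive X f g \<longleftrightarrow> (\<exists>d>0. \<forall>A. continuum_in X A \<longrightarrow>
      (\<forall>n::int. zpow f g n ` A \<in> C_delta X d) \<longrightarrow> A \<in> C_delta X 0)"

end

theory Submission
  imports Defs
begin

lemma iter_props:
  assumes "continuous_on X h" "h ` X \<subseteq> X"
  shows "continuous_on X (h^^n) \<and> (h^^n) ` X \<subseteq> X"
proof (induction n)
  case 0 then show ?case by (simp add: continuous_on_id)
next
  case (Suc n)
  then have "continuous_on X (h \<circ> (h^^n))"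
    by (meson assms(1) continuous_on_compose continuous_on_subset)
  moreover have "(h \<circ> (h^^n)) ` X \<subseteq> X" using Suc assms(2) by (auto simp: image_subset_iff)
  ultimately show ?case by simp
qed

lemma infdist_lessE:
  fixes x :: "'a::metric_space"
  assumes "A \<noteq> {}" "infdist x A < r" shows "\<exists>a\<in>A. dist x a < r"
proof -
  have "bdd_below ((dist x) ` A)" by (rule bdd_belowI[of _ 0]) auto
  then show ?thesis using assms by (simp add: infdist_notempty cINF_less_iff)
qed

lemma haus_close:
  fixes A B :: "'a::metric_space set"
  assumes "compact A" "compact B" "A \<noteq> {}" "B \<noteq> {}" "hausdist A B < r"
  shows "(\<forall>a\<in>A. \<exists>b\<in>B. dist a b < r) \<and> (\<forall>b\<in>B. \<exists>a\<in>A. dist a b < r)"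
proof -
  have ba: "bdd_above ((\<lambda>a. infdist a B) ` A)"
    by (intro bounded_imp_bdd_above compact_imp_bounded compact_continuous_image assms continuous_on_infdist continuous_on_id)
  have bb: "bdd_above ((\<lambda>b. infdist b A) ` B)"
    by (intro bounded_imp_bdd_above compact_imp_bounded compact_continuous_image assms continuous_on_infdist continuous_on_id)
  have "\<forall>a\<in>A. infdist a B < r"
  proof
    fix a assume "a \<in> A"
    then have "infdist a B \<le> (SUP a\<in>A. infdist a B)" using ba by (rule cSUP_upper)
    also have "\<dots> \<le> hausdist A B" unfolding hausdist_def by simp
    finally show "infdist a B < r" using assms by linarith
  qed
  moreover have "\<forall>b\<in>B. infdist b A < r"
  proof
    fix b assume "b \<in> B"
    then have "infdist b A \<le> (SUP b\<in>B. infdist b A)" using bb by (rule cSUP_upper)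
    also have "\<dots> \<le> hausdist A B" unfolding hausdist_def by simp
    finally show "infdist b A < r" using assms by linarith
  qed
  ultimately have a1: "\<forall>a\<in>A. infdist a B < r" and b1: "\<forall>b\<in>B. infdist b A < r" by auto
  have "\<forall>a\<in>A. \<exists>b\<in>B. dist a b < r" using a1 infdist_lessE[OF assms(4)] by blast
  moreover have "\<forall>b\<in>B. \<exists>a\<in>A. dist a b < r"
  proof
    fix b assume "b \<in> B"
    then obtain a where "a \<in> A" "dist b a < r" using b1 infdist_lessE[OF assms(3)] by blast
    then show "\<exists>a\<in>A. dist a b < r" by (auto simp: dist_commute)
  qed
  ultimately show ?thesis by blast
qed

lemma diam_close:
  fixes S T :: "'a::metric_space set"
  assumes "bounded S" "bounded T" "S \<noteq> {}" "T \<noteq> {}"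
    "\<forall>x\<in>S. \<exists>y\<in>T. dist x y < e"
  shows "diameter S \<le> diameter T + 2 * e"
proof -
  have "\<And>x y. x \<in> S \<Longrightarrow> y \<in> S \<Longrightarrow> dist x y \<le> diameter T + 2 * e"
  proof -
    fix x y assume "x \<in> S" "y \<in> S"
    then obtain x' y' where "x' \<in> T" "y' \<in> T" "dist x x' < e" "dist y y' < e" using assms by meson
    moreover have "dist x' y' \<le> diameter T" using diameter_bounded_bound assms \<open>x' \<in> T\<close> \<open>y' \<in> T\<close> by blast
    moreover have "dist x y \<le> dist x x' + dist x' y' + dist y y'"
    proof -
      have "dist x y \<le> dist x x' + dist x' y" by (rule dist_triangle)
      moreover have "dist x' y \<le> dist x' y' + dist y' y" by (rule dist_triangle)
      moreover have "dist y' y = dist y y'" by (rule dist_commute)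
      ultimately show ?thesis by linarith
    qed
    ultimately show "dist x y \<le> diameter T + 2 * e" by linarith
  qed
  then have H: "\<And>p. p \<in> S \<times> S \<Longrightarrow> (case p of (x, y) \<Rightarrow> dist x y) \<le> diameter T + 2 * e" by auto
  have "(SUP p\<in>S \<times> S. (case p of (x, y) \<Rightarrow> dist x y)) \<le> diameter T + 2 * e"
    using assms(3) H by (intro cSUP_least) auto
  moreover have "diameter S = (SUP p\<in>S \<times> S. (case p of (x, y) \<Rightarrow> dist x y))"
    using assms(3) by (simp add: diameter_def)
  ultimately show ?thesis by simp
qed

lemma abs_suminf_bound:
  fixes f g :: "nat \<Rightarrow> real"
  assumes "\<And>n. \<bar>f n\<bar> \<le> g n" "summable g"
  shows "\<bar>suminf f\<bar> \<le> suminf g"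
proof -
  have sf: "summable f" using assms by (intro summable_comparison_test[of f g]) auto
  have "suminf f \<le> suminf g" using assms sf by (intro suminf_le) (auto simp: abs_le_iff)
  moreover have "suminf (\<lambda>n. - f n) \<le> suminf g" using assms sf
    by (intro suminf_le) (auto simp: abs_le_iff summable_minus)
  moreover have "suminf (\<lambda>n. - f n) = - suminf f" using sf by (rule suminf_minus)
  ultimately show ?thesis by linarith
qed

lemma finite_cont:
  fixes h :: "nat \<Rightarrow> 'b \<Rightarrow> real" and D :: "'b \<Rightarrow> real"
  assumes "\<forall>n e. e > 0 \<longrightarrow> (\<exists>r>0. \<forall>B\<in>S. D B < r \<longrightarrow> \<bar>h n B - h n A\<bar> < e)"
  shows "e > 0 \<Longrightarrow> \<exists>r>0. \<forall>B\<in>S. D B < r \<longrightarrow> (\<forall>n<N. \<bar>h n B - h n A\<bar> < e)"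
proof (induction N)
  case 0 then show ?case by (intro exI[of _ "1::real"]) auto
next
  case (Suc N)
  then obtain r1 where r1: "r1 > 0" "\<forall>B\<in>S. D B < r1 \<longrightarrow> (\<forall>n<N. \<bar>h n B - h n A\<bar> < e)" by blast
  obtain r2 where r2: "r2 > 0" "\<forall>B\<in>S. D B < r2 \<longrightarrow> \<bar>h N B - h N A\<bar> < e" using assms Suc.prems by blast
  show ?case using r1 r2 by (intro exI[of _ "min r1 r2"]) (auto simp: less_Suc_eq)
qed

lemma series_cont:
  fixes h :: "nat \<Rightarrow> 'b \<Rightarrow> real" and l M :: real and D :: "'b \<Rightarrow> real"
  assumes l: "0 \<le> l" "l < 1" and M: "M \<ge> 0" and bd: "\<forall>n. \<forall>x\<in>S. \<bar>h n x\<bar> \<le> M" and A: "A \<in> S"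
    and hc: "\<forall>n e. e > 0 \<longrightarrow> (\<exists>r>0. \<forall>B\<in>S. D B < r \<longrightarrow> \<bar>h n B - h n A\<bar> < e)"
    and e: "e > 0"
  shows "\<exists>r>0. \<forall>B\<in>S. D B < r \<longrightarrow> \<bar>(\<Sum>n. l^n * h n B) - (\<Sum>n. l^n * h n A)\<bar> < e"
proof -
  define K where "K = 2 * M + 1"
  have K: "K > 0" using M by (simp add: K_def)
  have "(\<lambda>n. l^n) \<longlonglongrightarrow> 0" using l by (intro LIMSEQ_power_zero) auto
  moreover have "e * (1 - l) / (2 * K) > 0" using e l K by simp
  ultimately obtain N where N: "l^N < e * (1 - l) / (2 * K)"
    by (metis (no_types, lifting) LIMSEQ_D abs_of_nonneg diff_zero l(1) le_refl real_norm_def zero_le_power)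
  define e' where "e' = e * (1 - l) / 2"
  have e': "e' > 0" using e l by (simp add: e'_def)
  obtain r where r: "r > 0" "\<forall>B\<in>S. D B < r \<longrightarrow> (\<forall>n<N. \<bar>h n B - h n A\<bar> < e')"
    using finite_cont[OF hc e'] by blast
  have sg: "summable (\<lambda>n. l^n)" using l by (intro summable_geometric) auto
  have summ: "summable (\<lambda>n. l^n * h n x)" if "x \<in> S" for x
  proof (rule summable_comparison_test[of _ "\<lambda>n. M * l^n"])
    show "\<exists>N. \<forall>n\<ge>N. norm (l ^ n * h n x) \<le> M * l ^ n"
    proof (intro exI[of _ 0] allI impI)
      fix n :: nat
      have "\<bar>h n x\<bar> \<le> M" using bd that by auto
      then have "l^n * \<bar>h n x\<bar> \<le> l^n * M" using l by (intro mult_left_mono) auto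
      then show "norm (l ^ n * h n x) \<le> M * l ^ n" using l
        by (simp add: abs_mult mult.commute)
    qed
    show "summable (\<lambda>n. M * l ^ n)" using sg by (rule summable_mult)
  qed
  show ?thesis
  proof (intro exI[of _ r] conjI ballI impI)
    show "r > 0" by fact
    fix B assume B: "B \<in> S" "D B < r"
    define d where "d n = l^n * (h n B - h n A)" for n
    have sd: "summable d" unfolding d_def using summ[OF B(1)] summ[OF A]
      by (simp add: right_diff_distrib summable_diff)
    have eq: "(\<Sum>n. l^n * h n B) - (\<Sum>n. l^n * h n A) = suminf d"
      unfolding d_def using summ[OF B(1)] summ[OF A] by (simp add: right_diff_distrib suminf_diff)
    have split: "suminf d = (\<Sum>n. d (n + N)) + (\<Sum>i<N. d i)"
      using sd by (rule suminf_split_initial_segment)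
    have fin: "\<bar>\<Sum>i<N. d i\<bar> \<le> e' / (1 - l)"
    proof -
      have "\<bar>\<Sum>i<N. d i\<bar> \<le> (\<Sum>i<N. \<bar>d i\<bar>)" by (rule sum_abs)
      also have "\<dots> \<le> (\<Sum>i<N. e' * l^i)"
      proof (rule sum_mono)
        fix i assume "i \<in> {..<N}"
        then have "\<bar>h i B - h i A\<bar> < e'" using r B by auto
        then have "l^i * \<bar>h i B - h i A\<bar> \<le> l^i * e'" using l by (intro mult_left_mono) auto
        then show "\<bar>d i\<bar> \<le> e' * l^i" using l unfolding d_def
          by (simp add: abs_mult mult.commute)
      qed
      also have "\<dots> = e' * (\<Sum>i<N. l^i)" by (simp add: sum_distrib_left)
      also have "(\<Sum>i<N. l^i) = (1 - l^N) / (1 - l)" using l by (simp add: sum_gp_strict)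
      also have "e' * ((1 - l^N) / (1 - l)) \<le> e' / (1 - l)" using l e'
        by (simp add: divide_right_mono mult_left_mono_neg zero_le_power divide_le_cancel)
      finally show ?thesis .
    qed
    have tail: "\<bar>\<Sum>n. d (n + N)\<bar> \<le> (\<Sum>n. K * l^N * l^n)"
    proof (rule abs_suminf_bound)
      fix n
      have "\<bar>h (n+N) B - h (n+N) A\<bar> \<le> K" 
      proof -
        have "\<bar>h (n+N) B\<bar> \<le> M" "\<bar>h (n+N) A\<bar> \<le> M" using bd B A by auto
        then show ?thesis unfolding K_def by linarith
      qed
      then have "l^(n+N) * \<bar>h (n+N) B - h (n+N) A\<bar> \<le> l^(n+N) * K" using l by (intro mult_left_mono) auto
      then show "\<bar>d (n + N)\<bar> \<le> K * l^N * l^n" using l unfolding d_def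
        by (simp add: abs_mult power_add mult.commute mult.left_commute)
      show "summable (\<lambda>n. K * l^N * l^n)" using sg by (rule summable_mult)
    qed
    have "(\<Sum>n. K * l^N * l^n) = K * l^N * (1 / (1 - l))"
      using l by (simp add: suminf_mult suminf_geometric sg)
    also have "\<dots> < e / 2"
    proof -
      have "K * l^N < K * (e * (1 - l) / (2 * K))" by (rule mult_strict_left_mono[OF N K])
      also have "\<dots> = e * (1 - l) / 2" using K by simp
      finally have "K * l^N < e * (1 - l) / 2" .
      then show ?thesis using l by (simp add: field_simps)
    qed
    finally have t2: "\<bar>\<Sum>n. d (n + N)\<bar> < e / 2" using tail by linarith
    have l1: "1 - l \<noteq> 0" using l by simp
    have f2: "e' / (1 - l) = e / 2" using l1 unfolding e'_def by (simp add: field_simps)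
    show "\<bar>(\<Sum>n. l^n * h n B) - (\<Sum>n. l^n * h n A)\<bar> < e"
      using eq split fin t2 f2 by linarith
  qed
qed


lemma img_cont:
  assumes "continuous_on X h" "h ` X \<subseteq> X" "continuum_in X A"
  shows "continuum_in X (h ` A)"
proof -
  have A: "A \<subseteq> X" "A \<noteq> {}" "compact A" "connected A" using assms(3) by (auto simp: continuum_in_def)
  have c: "continuous_on A h" using assms(1) A(1) by (rule continuous_on_subset)
  show ?thesis unfolding continuum_in_def
    using A assms(2) c compact_continuous_image connected_continuous_image by blast
qed

lemma psi_cont:
  fixes X :: "'a::metric_space set"
  assumes X: "compact X" and hc: "continuous_on X h" and hX: "h ` X \<subseteq> X"
    and A: "A \<in> C_delta X d" and e: "e > 0"
  shows "\<exists>r>0. \<forall>B\<in>C_delta X d. hausdist A B < r \<longrightarrow>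
     \<bar>max 0 (diameter (h ` B) - d) - max 0 (diameter (h ` A) - d)\<bar> < e"
proof -
  have "uniformly_continuous_on X h" using hc X by (rule compact_uniformly_continuous)
  then obtain r where r: "r > 0" "\<And>x y. x \<in> X \<Longrightarrow> y \<in> X \<Longrightarrow> dist y x < r \<Longrightarrow> dist (h y) (h x) < e / 3"
    unfolding uniformly_continuous_on_def using e by (metis zero_less_divide_iff zero_less_numeral)
  have Ap: "A \<subseteq> X" "A \<noteq> {}" "compact A" using A by (auto simp: C_delta_def continuum_in_def)
  show ?thesis
  proof (intro exI[of _ r] conjI ballI impI)
    show "r > 0" by fact
    fix B assume B: "B \<in> C_delta X d" "hausdist A B < r"
    have Bp: "B \<subseteq> X" "B \<noteq> {}" "compact B" using B by (auto simp: C_delta_def continuum_in_def)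
    have cl: "(\<forall>a\<in>A. \<exists>b\<in>B. dist a b < r) \<and> (\<forall>b\<in>B. \<exists>a\<in>A. dist a b < r)"
      using haus_close Ap Bp B(2) by blast
    have hA: "compact (h ` A)" using Ap hc by (meson compact_continuous_image continuous_on_subset)
    have hB: "compact (h ` B)" using Bp hc by (meson compact_continuous_image continuous_on_subset)
    have c1: "\<forall>x\<in>h ` A. \<exists>y\<in>h ` B. dist x y < e / 3"
    proof
      fix x assume "x \<in> h ` A"
      then obtain a where a: "a \<in> A" "x = h a" by blast
      then obtain b where "b \<in> B" "dist a b < r" using cl by blast
      then have "dist (h a) (h b) < e / 3" using r(2)[of b a] a Ap Bp by auto
      then show "\<exists>y\<in>h ` B. dist x y < e / 3" using \<open>b \<in> B\<close> a by blast
    qed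
    have c2: "\<forall>x\<in>h ` B. \<exists>y\<in>h ` A. dist x y < e / 3"
    proof
      fix x assume "x \<in> h ` B"
      then obtain b where b: "b \<in> B" "x = h b" by blast
      then obtain a where "a \<in> A" "dist a b < r" using cl by blast
      then have "dist (h b) (h a) < e / 3" using r(2)[of a b] b Ap Bp by (auto simp: dist_commute)
      then show "\<exists>y\<in>h ` A. dist x y < e / 3" using \<open>a \<in> A\<close> b by blast
    qed
    have d1: "diameter (h ` A) \<le> diameter (h ` B) + 2 * (e / 3)"
      using diam_close[OF compact_imp_bounded[OF hA] compact_imp_bounded[OF hB] _ _ c1] Ap Bp by auto
    have d2: "diameter (h ` B) \<le> diameter (h ` A) + 2 * (e / 3)"
      using diam_close[OF compact_imp_bounded[OF hB] compact_imp_bounded[OF hA] _ _ c2] Ap Bp by auto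
    show "\<bar>max 0 (diameter (h ` B) - d) - max 0 (diameter (h ` A) - d)\<bar> < e"
      using d1 d2 e by (simp add: abs_less_iff max_def)
  qed
qed


theorem mainTheorem18:
  fixes X :: "'a::metric_space set" and f g :: "'a \<Rightarrow> 'a"
  assumes "compact X"
    and "homeomorphism X X f g"
    and "cw_expansive X f g"
  shows "\<exists>d>0. \<exists>L :: 'a set \<Rightarrow> real.
     (\<forall>A\<in>C_delta X d. \<forall>e>0. \<exists>r>0. \<forall>B\<in>C_delta X d. hausdist A B < r \<longrightarrow> \<bar>L B - L A\<bar> < e)
   \<and> (\<forall>A\<in>C_delta X d. L A \<ge> 0 \<and> (L A = 0 \<longleftrightarrow> (\<exists>x. A = {x})))
   \<and> (\<forall>A. f ` A \<in> C_delta X d \<and> A \<in> C_delta X d \<and> g ` A \<in> C_delta X d \<longrightarrow>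
          L (f ` A) - 2 * L A + L (g ` A) = L A)"
proof -
  obtain d where d: "d > 0" and dexp: "\<And>A. continuum_in X A \<Longrightarrow>
      (\<forall>n::int. zpow f g n ` A \<in> C_delta X d) \<Longrightarrow> A \<in> C_delta X 0"
    using assms(3) unfolding cw_expansive_def by blast
  have gf: "\<And>x. x \<in> X \<Longrightarrow> g (f x) = x" and fg: "\<And>x. x \<in> X \<Longrightarrow> f (g x) = x"
    and fX: "f ` X = X" and gX: "g ` X = X" and cf: "continuous_on X f" and cg: "continuous_on X g"
    using assms(2) unfolding homeomorphism_def by auto
  have iterf: "continuous_on X (f^^n) \<and> (f^^n) ` X \<subseteq> X" for n using iter_props[OF cf] fX by auto
  have iterg: "continuous_on X (g^^n) \<and> (g^^n) ` X \<subseteq> X" for n using iter_props[OF cg] gX by auto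
  have bX: "bounded X" using assms(1) by (rule compact_imp_bounded)
  define l :: real where "l = (3 - sqrt 5) / 2"
  have s5: "sqrt 5 > (2::real)" "sqrt 5 < (3::real)" "(sqrt 5)^2 = (5::real)"
  proof -
    show "sqrt 5 > (2::real)" by (rule real_less_rsqrt) simp
    have "sqrt 5 < sqrt (9::real)" by (simp only: real_sqrt_less_iff)
    moreover have "sqrt 9 = (3::real)" by (rule real_sqrt_unique) auto
    ultimately show "sqrt 5 < (3::real)" by simp
    show "(sqrt 5)^2 = (5::real)" by simp
  qed
  have l: "0 < l" "l < 1" "l * l + 1 = 3 * l"
    using s5 unfolding l_def by (auto simp: power2_eq_square field_simps)
  define \<psi> where "\<psi> C = max 0 (diameter C - d)" for C :: "'a set"
  define h where "h n B = \<psi> ((f^^n) ` B) + \<psi> ((g^^n) ` B)" for n B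
  define L where "L B = (\<Sum>n. l^n * h n B)" for B
  have psi_bd: "0 \<le> \<psi> C \<and> \<psi> C \<le> diameter X" if "C \<subseteq> X" for C
  proof -
    have "diameter C \<le> diameter X" using that bX by (rule diameter_subset)
    moreover have "0 \<le> diameter X" using bX by (rule diameter_ge_0)
    ultimately show ?thesis using d unfolding \<psi>_def by auto
  qed
  have sumab: "summable (\<lambda>n. l^n * a n)" if "\<And>n. 0 \<le> a n \<and> a n \<le> c" for a :: "nat \<Rightarrow> real" and c
  proof (rule summable_comparison_test[of _ "\<lambda>n. c * l^n"])
    show "\<exists>N. \<forall>n\<ge>N. norm (l ^ n * a n) \<le> c * l ^ n"
    proof (intro exI[of _ 0] allI impI)
      fix n :: nat
      have "l^n * a n \<le> l^n * c" using that l by (intro mult_left_mono) auto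
      then show "norm (l ^ n * a n) \<le> c * l ^ n" using that l
        by (simp add: abs_mult mult.commute)
    qed
    show "summable (\<lambda>n. c * l ^ n)" using l by (intro summable_mult summable_geometric) auto
  qed
  have fsub: "(f^^n) ` B \<subseteq> X" if "B \<subseteq> X" for n B using iterf[of n] that by auto
  have gsub: "(g^^n) ` B \<subseteq> X" if "B \<subseteq> X" for n B using iterg[of n] that by auto
  have sp: "summable (\<lambda>n. l^n * \<psi> ((f^^n) ` B))" if "B \<subseteq> X" for B
    by (rule sumab[of "\<lambda>n. \<psi> ((f^^n) ` B)" "diameter X"], rule psi_bd[OF fsub[OF that]])
  have sq: "summable (\<lambda>n. l^n * \<psi> ((g^^n) ` B))" if "B \<subseteq> X" for B
    by (rule sumab[of "\<lambda>n. \<psi> ((g^^n) ` B)" "diameter X"], rule psi_bd[OF gsub[OF that]])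
  have h_bd: "0 \<le> h n B \<and> h n B \<le> 2 * diameter X" if "B \<subseteq> X" for n B
    using psi_bd[OF fsub[OF that, of n]] psi_bd[OF gsub[OF that, of n]] unfolding h_def by auto
  have sh: "summable (\<lambda>n. l^n * h n B)" if "B \<subseteq> X" for B
    by (rule sumab[of "\<lambda>n. h n B" "2 * diameter X"], rule h_bd[OF that])
  have Lsplit: "L B = (\<Sum>n. l^n * \<psi> ((f^^n) ` B)) + (\<Sum>n. l^n * \<psi> ((g^^n) ` B))" if "B \<subseteq> X" for B
    unfolding L_def h_def using sp[OF that] sq[OF that]
    by (simp add: distrib_left suminf_add)
  have CX: "B \<subseteq> X" if "B \<in> C_delta X d" for B using that by (auto simp: C_delta_def continuum_in_def)
  have psi0: "\<psi> B = 0" if "B \<in> C_delta X d" for B using that unfolding \<psi>_def C_delta_def by auto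
  have c1: "\<forall>A\<in>C_delta X d. \<forall>e>0. \<exists>r>0. \<forall>B\<in>C_delta X d. hausdist A B < r \<longrightarrow> \<bar>L B - L A\<bar> < e"
  proof (intro ballI allI impI)
    fix A :: "'a set" and e :: real assume A: "A \<in> C_delta X d" and e: "e > 0"
    have hc: "\<forall>n e. e > 0 \<longrightarrow> (\<exists>r>0. \<forall>B\<in>C_delta X d. hausdist A B < r \<longrightarrow> \<bar>h n B - h n A\<bar> < e)"
    proof (intro allI impI)
      fix n and e :: real assume e: "e > 0"
      obtain r1 where r1: "r1 > 0" "\<forall>B\<in>C_delta X d. hausdist A B < r1 \<longrightarrow> \<bar>\<psi> ((f^^n) ` B) - \<psi> ((f^^n) ` A)\<bar> < e/2"
        using psi_cont[OF assms(1) _ _ A, of "f^^n" "e/2"] iterf[of n] e unfolding \<psi>_def by auto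
      obtain r2 where r2: "r2 > 0" "\<forall>B\<in>C_delta X d. hausdist A B < r2 \<longrightarrow> \<bar>\<psi> ((g^^n) ` B) - \<psi> ((g^^n) ` A)\<bar> < e/2"
        using psi_cont[OF assms(1) _ _ A, of "g^^n" "e/2"] iterg[of n] e unfolding \<psi>_def by auto
      show "\<exists>r>0. \<forall>B\<in>C_delta X d. hausdist A B < r \<longrightarrow> \<bar>h n B - h n A\<bar> < e"
      proof (intro exI[of _ "min r1 r2"] conjI ballI impI)
        show "min r1 r2 > 0" using r1 r2 by simp
        fix B assume "B \<in> C_delta X d" "hausdist A B < min r1 r2"
        then have "\<bar>\<psi> ((f^^n) ` B) - \<psi> ((f^^n) ` A)\<bar> < e/2" "\<bar>\<psi> ((g^^n) ` B) - \<psi> ((g^^n) ` A)\<bar> < e/2"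
          using r1 r2 by auto
        then show "\<bar>h n B - h n A\<bar> < e" unfolding h_def by linarith
      qed
    qed
    have bd: "\<forall>n. \<forall>x\<in>C_delta X d. \<bar>h n x\<bar> \<le> 2 * diameter X" using h_bd CX by fastforce
    have "0 \<le> 2 * diameter X" using diameter_ge_0[OF bX] by simp
    from series_cont[OF _ _ this bd A hc e, of l] l
    show "\<exists>r>0. \<forall>B\<in>C_delta X d. hausdist A B < r \<longrightarrow> \<bar>L B - L A\<bar> < e"
      unfolding L_def by auto
  qed
  have c2: "\<forall>A\<in>C_delta X d. L A \<ge> 0"
  proof
    fix A assume A: "A \<in> C_delta X d"
    show "L A \<ge> 0" unfolding L_def using sh[OF CX[OF A]] h_bd[OF CX[OF A]] l
      by (intro suminf_nonneg) auto
  qed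
  have c3: "\<forall>A\<in>C_delta X d. (L A = 0 \<longleftrightarrow> (\<exists>x. A = {x}))"
  proof
    fix A assume A: "A \<in> C_delta X d"
    have AX: "A \<subseteq> X" by (rule CX[OF A])
    show "L A = 0 \<longleftrightarrow> (\<exists>x. A = {x})"
    proof
      assume L0: "L A = 0"
      have "\<forall>n. l^n * h n A = 0"
        using L0 sh[OF AX] h_bd[OF AX] l unfolding L_def
        by (subst suminf_eq_zero_iff[symmetric]) auto
      then have h0: "h n A = 0" for n using l by auto
      have pf: "\<psi> ((f^^n) ` A) = 0" and pg: "\<psi> ((g^^n) ` A) = 0" for n
        using h0[of n] psi_bd[OF fsub[OF AX, of n]] psi_bd[OF gsub[OF AX, of n]] unfolding h_def by auto
      have cA: "continuum_in X A" using A by (simp add: C_delta_def)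
      have "\<forall>n::int. zpow f g n ` A \<in> C_delta X d"
      proof
        fix n :: int
        show "zpow f g n ` A \<in> C_delta X d"
        proof (cases "n \<ge> 0")
          case True
          have "continuum_in X ((f^^nat n) ` A)" using img_cont iterf cA by blast
          moreover have "diameter ((f^^nat n) ` A) \<le> d" using pf[of "nat n"] unfolding \<psi>_def by auto
          ultimately show ?thesis using True by (simp add: zpow_def C_delta_def)
        next
          case False
          have "continuum_in X ((g^^nat (-n)) ` A)" using img_cont iterg cA by blast
          moreover have "diameter ((g^^nat (-n)) ` A) \<le> d" using pg[of "nat (-n)"] unfolding \<psi>_def by auto
          ultimately show ?thesis using False by (simp add: zpow_def C_delta_def)
        qed
      qed
      then have "A \<in> C_delta X 0" using dexp cA by blast
      then have A0: "diameter A \<le> 0" "A \<noteq> {}" "compact A" by (auto simp: C_delta_def continuum_in_def)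
      then obtain x where x: "x \<in> A" by blast
      have "y = x" if "y \<in> A" for y
      proof -
        have "dist x y \<le> 0" using diameter_bounded_bound[OF compact_imp_bounded[OF A0(3)] x that] A0(1) by linarith
        then show "y = x" by simp
      qed
      then have "A = {x}" using x by blast
      then show "\<exists>x. A = {x}" by blast
    next
      assume "\<exists>x. A = {x}"
      then obtain x where x: "A = {x}" by blast
      have "h n A = 0" for n using d unfolding h_def \<psi>_def x by simp
      then show "L A = 0" unfolding L_def by simp
    qed
  qed
  have c4: "\<forall>A. f ` A \<in> C_delta X d \<and> A \<in> C_delta X d \<and> g ` A \<in> C_delta X d \<longrightarrow>
          L (f ` A) - 2 * L A + L (g ` A) = L A"
  proof (intro allI impI)
    fix A assume H: "f ` A \<in> C_delta X d \<and> A \<in> C_delta X d \<and> g ` A \<in> C_delta X d"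
    then have A: "A \<in> C_delta X d" and fA: "f ` A \<in> C_delta X d" and gA: "g ` A \<in> C_delta X d" by auto
    have AX: "A \<subseteq> X" by (rule CX[OF A])
    have gfA: "g ` f ` A = A" using AX gf by (force simp: image_iff)
    have fgA: "f ` g ` A = A" using AX fg by (force simp: image_iff)
    define P where "P = (\<Sum>n. l^n * \<psi> ((f^^n) ` A))"
    define Q where "Q = (\<Sum>n. l^n * \<psi> ((g^^n) ` A))"
    have Psum: "(\<lambda>n. l^n * \<psi> ((f^^n) ` A)) sums P" unfolding P_def using sp[OF AX] by (rule summable_sums)
    have Qsum: "(\<lambda>n. l^n * \<psi> ((g^^n) ` A)) sums Q" unfolding Q_def using sq[OF AX] by (rule summable_sums)
    have A0: "\<psi> A = 0" by (rule psi0[OF A])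
    have up: "(\<lambda>n. l^n * \<psi> ((k^^n) ` (k ` A))) sums (S / l)"
      if "(\<lambda>n. l^n * \<psi> ((k^^n) ` A)) sums S" for k and S
    proof -
      have "(\<lambda>n. l^(Suc n) * \<psi> ((k^^(Suc n)) ` A)) sums S"
        using that A0 by (subst sums_Suc_iff) simp
      then have "(\<lambda>n. l^(Suc n) * \<psi> ((k^^(Suc n)) ` A) / l) sums (S / l)" by (rule sums_divide)
      moreover have "l^(Suc n) * \<psi> ((k^^(Suc n)) ` A) / l = l^n * \<psi> ((k^^n) ` (k ` A))" for n
        using l(1) by (simp add: funpow_swap1 image_comp)
      ultimately show ?thesis by simp
    qed
    have down: "(\<lambda>n. l^n * \<psi> ((k^^n) ` (j ` A))) sums (l * S)"
      if "(\<lambda>n. l^n * \<psi> ((k^^n) ` A)) sums S" and kj: "k ` j ` A = A" and j0: "\<psi> (j ` A) = 0" for k j and S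
    proof -
      have "(\<lambda>n. l * (l^n * \<psi> ((k^^n) ` A))) sums (l * S)" using that(1) by (rule sums_mult)
      moreover have "l * (l^n * \<psi> ((k^^n) ` A)) = l^(Suc n) * \<psi> ((k^^(Suc n)) ` (j ` A))" for n
      proof -
        have "(k^^(Suc n)) ` (j ` A) = ((k^^n) \<circ> k) ` (j ` A)" by (simp only: funpow_Suc_right)
        also have "\<dots> = (k^^n) ` (k ` j ` A)" by (simp only: image_comp o_assoc)
        also have "\<dots> = (k^^n) ` A" by (simp only: kj)
        finally have e: "(k^^(Suc n)) ` (j ` A) = (k^^n) ` A" .
        show ?thesis unfolding e by simp
      qed
      ultimately have "(\<lambda>n. l^(Suc n) * \<psi> ((k^^(Suc n)) ` (j ` A))) sums (l * S)" by simp
      then show ?thesis using j0 by (subst (asm) sums_Suc_iff) simp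
    qed
    have "L (f ` A) = P / l + l * Q"
    proof -
      have fAX: "f ` A \<subseteq> X" by (rule CX[OF fA])
      have "L (f ` A) = (\<Sum>n. l^n * \<psi> ((f^^n) ` (f ` A))) + (\<Sum>n. l^n * \<psi> ((g^^n) ` (f ` A)))"
        by (rule Lsplit[OF fAX])
      also have "\<dots> = P / l + l * Q"
        using sums_unique[OF up[OF Psum]] sums_unique[OF down[OF Qsum gfA psi0[OF fA]]] by simp
      finally show ?thesis .
    qed
    moreover have "L (g ` A) = Q / l + l * P"
    proof -
      have gAX: "g ` A \<subseteq> X" by (rule CX[OF gA])
      have "L (g ` A) = (\<Sum>n. l^n * \<psi> ((f^^n) ` (g ` A))) + (\<Sum>n. l^n * \<psi> ((g^^n) ` (g ` A)))"
        by (rule Lsplit[OF gAX])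
      also have "\<dots> = l * P + Q / l"
        using sums_unique[OF up[OF Qsum]] sums_unique[OF down[OF Psum fgA psi0[OF gA]]] by simp
      finally show ?thesis by simp
    qed
    moreover have "L A = P + Q" unfolding P_def Q_def by (rule Lsplit[OF AX])
    moreover have "P / l + l * Q + (Q / l + l * P) = 3 * (P + Q)"
    proof -
      have "l + 1 / l = 3" using l by (simp add: field_simps)
      moreover have "P / l + l * Q + (Q / l + l * P) = (l + 1 / l) * (P + Q)" using l(1) by (simp add: field_simps)
      ultimately show ?thesis by simp
    qed
    ultimately have s3: "L (f ` A) + L (g ` A) = 3 * L A" by simp
    then show "L (f ` A) - 2 * L A + L (g ` A) = L A" by linarith
  qed
  show ?thesis using d c1 c2 c3 c4 by (intro exI[of _ d] exI[of _ L] conjI) auto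
qed

end
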